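(* Let $G$ be a finite simple graph, let $P$ be a pebble distribution on $G$, and let $U$ be a unit distribution of nonzero size with all pebbles on a vertex $u$, with $P$ and $U$ disjoint. Then every cooperation vertex (with respect to $P$ and $U$) has a neighbor that has cooperation excess.
   Context: A pebble distribution is a function $V(G)\to\mathbb{Z}_{\geq0}$; $(P+U)(v)=P(v)+U(v)$; disjoint means no vertex has pebbles under both. A pebbling move removes two pebbles from a vertex and adds one to an adjacent vertex. A vertex $v$ is $k$-reachable under $P$ if some executable sequence of pebbling moves yields at least $k$ pebbles on $v$; reachable means $1$-reachable. $\mathrm{reach}(P,v)$ is the largest such $k$; $\mathrm{exc}(P,v)=\mathrm{reach}(P,v)-1$ if $v$ is reachable, else $0$. A cooperation vertex is a vertex reachable under $P+U$ but reachable under neither $P$ nor $U$. The cooperation excess of a vertex $v$ is $\mathrm{exc}(P+U,v)-\mathrm{exc}(P,v)-\mathrm{exc}(U,v)$; $v$ has cooperation excess if this is positive. *)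

theory Defs
  imports Main
begin

definition simple_graph :: "'a set \<Rightarrow> ('a \<Rightarrow> 'a \<Rightarrow> bool) \<Rightarrow> bool" where
  "simple_graph V E \<longleftrightarrow> finite V \<and> (\<forall>x y. E x y \<longrightarrow> x \<in> V \<and> y \<in> V)
     \<and> (\<forall>x y. E x y \<longrightarrow> E y x) \<and> (\<forall>x. \<not> E x x)"

definition distribution :: "'a set \<Rightarrow> ('a \<Rightarrow> nat) \<Rightarrow> bool" where
  "distribution V P \<longleftrightarrow> (\<forall>x. x \<notin> V \<longrightarrow> P x = 0)"

definition dist_add :: "('a \<Rightarrow> nat) \<Rightarrow> ('a \<Rightarrow> nat) \<Rightarrow> ('a \<Rightarrow> nat)" where
  "dist_add P U = (\<lambda>x. P x + U x)"

definition disjoint_dist :: "('a \<Rightarrow> nat) \<Rightarrow> ('a \<Rightarrow> nat) \<Rightarrow> bool" where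
  "disjoint_dist P U \<longleftrightarrow> (\<forall>x. P x = 0 \<or> U x = 0)"

definition pebbling_move :: "('a \<Rightarrow> 'a \<Rightarrow> bool) \<Rightarrow> ('a \<Rightarrow> nat) \<Rightarrow> ('a \<Rightarrow> nat) \<Rightarrow> bool" where
  "pebbling_move E P Q \<longleftrightarrow>
     (\<exists>v w. E v w \<and> 2 \<le> P v \<and> Q = P(v := P v - 2, w := P w + 1))"

definition k_reachable :: "('a \<Rightarrow> 'a \<Rightarrow> bool) \<Rightarrow> ('a \<Rightarrow> nat) \<Rightarrow> 'a \<Rightarrow> nat \<Rightarrow> bool" where
  "k_reachable E P v k \<longleftrightarrow> (\<exists>Q. (pebbling_move E)\<^sup>*\<^sup>* P Q \<and> k \<le> Q v)"

definition reachable :: "('a \<Rightarrow> 'a \<Rightarrow> bool) \<Rightarrow> ('a \<Rightarrow> nat) \<Rightarrow> 'a \<Rightarrow> bool" where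
  "reachable E P v \<longleftrightarrow> k_reachable E P v 1"

definition reach :: "('a \<Rightarrow> 'a \<Rightarrow> bool) \<Rightarrow> ('a \<Rightarrow> nat) \<Rightarrow> 'a \<Rightarrow> nat" where
  "reach E P v = (GREATEST k. k_reachable E P v k)"

definition exc :: "('a \<Rightarrow> 'a \<Rightarrow> bool) \<Rightarrow> ('a \<Rightarrow> nat) \<Rightarrow> 'a \<Rightarrow> nat" where
  "exc E P v = (if reachable E P v then reach E P v - 1 else 0)"

definition cooperation_vertex ::
  "('a \<Rightarrow> 'a \<Rightarrow> bool) \<Rightarrow> ('a \<Rightarrow> nat) \<Rightarrow> ('a \<Rightarrow> nat) \<Rightarrow> 'a \<Rightarrow> bool" where
  "cooperation_vertex E P U v \<longleftrightarrow>
     reachable E (dist_add P U) v \<and> \<not> reachable E P v \<and> \<not> reachable E U v"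

definition cooperation_excess ::
  "('a \<Rightarrow> 'a \<Rightarrow> bool) \<Rightarrow> ('a \<Rightarrow> nat) \<Rightarrow> ('a \<Rightarrow> nat) \<Rightarrow> 'a \<Rightarrow> int" where
  "cooperation_excess E P U v =
     int (exc E (dist_add P U) v) - int (exc E P v) - int (exc E U v)"

definition has_cooperation_excess ::
  "('a \<Rightarrow> 'a \<Rightarrow> bool) \<Rightarrow> ('a \<Rightarrow> nat) \<Rightarrow> ('a \<Rightarrow> nat) \<Rightarrow> 'a \<Rightarrow> bool" where
  "has_cooperation_excess E P U v \<longleftrightarrow> cooperation_excess E P U v > 0"

end

theory Submission
  imports Defs
begin

lemma move_sum:
  fixes Q :: "'a \<Rightarrow> nat"
  assumes "finite V" "a \<in> V" "b \<in> V" "a \<noteq> b" "2 \<le> Q a"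
  shows "sum (Q(a := Q a - 2, b := Q b + 1)) V + 1 = sum Q V"
proof -
  let ?R = "V - {a, b}"
  have V: "V = insert a (insert b ?R)" using assms by auto
  have f: "finite ?R" using assms by auto
  have e: "sum (Q(a := Q a - 2, b := Q b + 1)) ?R = sum Q ?R"
    by (rule sum.cong) auto
  show ?thesis
    apply (subst (1 2) V)
    using assms f e by (simp add: sum.insert)
qed

lemma inv:
  assumes sg: "simple_graph V E" and d: "distribution V P0"
    and r: "(pebbling_move E)\<^sup>*\<^sup>* P0 Q"
  shows "distribution V Q \<and> sum Q V \<le> sum P0 V"
  using r
proof (induction rule: rtranclp_induct)
  case base
  then show ?case using d by simp
next
  case (step Q Q')
  then obtain a b where ab: "E a b" "2 \<le> Q a" "Q' = Q(a := Q a - 2, b := Q b + 1)"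
    unfolding pebbling_move_def by blast
  have fin: "finite V" and aV: "a \<in> V" and bV: "b \<in> V" and ne: "a \<noteq> b"
    using sg ab(1) unfolding simple_graph_def by metis+
  have "distribution V Q'" using step.IH aV bV ab(3) unfolding distribution_def by auto
  moreover have "sum Q' V + 1 = sum Q V" using move_sum[of V a b Q, OF fin aV bV ne ab(2)] ab(3) by simp
  ultimately show ?case using step.IH by simp
qed

lemma kr_bound:
  assumes sg: "simple_graph V E" and d: "distribution V P0" and "w \<in> V"
    and "k_reachable E P0 w k"
  shows "k \<le> sum P0 V"
proof -
  obtain Q where Q: "(pebbling_move E)\<^sup>*\<^sup>* P0 Q" "k \<le> Q w"
    using assms(4) unfolding k_reachable_def by blast
  have fin: "finite V" using sg unfolding simple_graph_def by blast
  have "Q w \<le> sum Q V" using member_le_sum[OF assms(3) _ fin, of Q] by simp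
  then show ?thesis using inv[OF sg d Q(1)] Q(2) by linarith
qed

lemma k2_reach:
  assumes "k_reachable E P0 w 2" "E w v"
  shows "reachable E P0 v"
proof -
  obtain Q where Q: "(pebbling_move E)\<^sup>*\<^sup>* P0 Q" "2 \<le> Q w"
    using assms(1) unfolding k_reachable_def by blast
  let ?Q' = "Q(w := Q w - 2, v := Q v + 1)"
  have "pebbling_move E Q ?Q'" unfolding pebbling_move_def using assms(2) Q(2) by blast
  hence "(pebbling_move E)\<^sup>*\<^sup>* P0 ?Q'" using Q(1) by simp
  then show ?thesis unfolding reachable_def k_reachable_def by (intro exI[of _ ?Q']) auto
qed

lemma exc_zero:
  assumes sg: "simple_graph V E" and d: "distribution V P0" and "w \<in> V"
    and "E w v" and "\<not> reachable E P0 v"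
  shows "exc E P0 w = 0"
proof (cases "reachable E P0 w")
  case True
  have b: "\<forall>y. k_reachable E P0 w y \<longrightarrow> y \<le> sum P0 V"
    using kr_bound[OF sg d assms(3)] by simp
  have "k_reachable E P0 w (reach E P0 w)"
  proof -
    have "k_reachable E P0 w 1" using True unfolding reachable_def .
    hence "k_reachable E P0 w (Greatest (k_reachable E P0 w))"
      by (rule GreatestI_nat) (use b in blast)
    thus ?thesis unfolding reach_def .
  qed
  moreover have "\<not> k_reachable E P0 w k" if "k \<ge> 2" for k
  proof
    assume "k_reachable E P0 w k"
    then obtain Q where "(pebbling_move E)\<^sup>*\<^sup>* P0 Q" "k \<le> Q w" unfolding k_reachable_def by blast
    hence "k_reachable E P0 w 2" using that unfolding k_reachable_def
      by (intro exI[of _ Q]) simp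
    from k2_reach[OF this assms(4)] assms(5) show False by contradiction
  qed
  ultimately have "\<not> reach E P0 w \<ge> 2" by blast
  hence "reach E P0 w \<le> 1" by simp
  then show ?thesis unfolding exc_def by simp
next
  case False
  then show ?thesis unfolding exc_def by simp
qed

lemma last_move:
  assumes "(pebbling_move E)\<^sup>*\<^sup>* P0 Q" "P0 v = 0" "1 \<le> Q v" "\<forall>x. \<not> E x x"
  shows "\<exists>R a. (pebbling_move E)\<^sup>*\<^sup>* P0 R \<and> 2 \<le> R a \<and> E a v"
  using assms(1,3)
proof (induction rule: rtranclp_induct)
  case base
  then show ?case using assms(2) by simp
next
  case (step Q Q')
  show ?case
  proof (cases "1 \<le> Q v")
    case True
    then show ?thesis using step.IH by blast
  next
    case False
    obtain a b where ab: "E a b" "2 \<le> Q a" "Q' = Q(a := Q a - 2, b := Q b + 1)"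
      using step.hyps(2) unfolding pebbling_move_def by blast
    have "b = v"
    proof (rule ccontr)
      assume "b \<noteq> v"
      hence "Q' v \<le> Q v" using ab(3) by auto
      thus False using False step.prems by simp
    qed
    then show ?thesis using ab step.hyps(1) by blast
  qed
qed

theorem claim3p4:
  fixes V :: "'a set" and E :: "'a \<Rightarrow> 'a \<Rightarrow> bool"
    and P U :: "'a \<Rightarrow> nat" and u :: 'a and t :: nat
  assumes "simple_graph V E"
    and "distribution V P"
    and "u \<in> V" and "t > 0"
    and "U = (\<lambda>x. if x = u then t else 0)"
    and "disjoint_dist P U"
  shows "\<forall>v \<in> V. cooperation_vertex E P U v \<longrightarrow>
           (\<exists>w. E v w \<and> has_cooperation_excess E P U w)"
proof (intro ballI impI)
  fix v assume vV: "v \<in> V" and cv: "cooperation_vertex E P U v"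
  have sg: "simple_graph V E" by fact
  have dU: "distribution V U" using assms(3,5) unfolding distribution_def by auto
  have dPU: "distribution V (dist_add P U)" using assms(2) dU
    unfolding distribution_def dist_add_def by auto
  have nP: "\<not> reachable E P v" and nU: "\<not> reachable E U v"
    and rPU: "reachable E (dist_add P U) v" using cv unfolding cooperation_vertex_def by auto
  have "P v = 0"
  proof (rule ccontr)
    assume "P v \<noteq> 0"
    hence "k_reachable E P v 1" unfolding k_reachable_def by (intro exI[of _ P]) simp
    thus False using nP unfolding reachable_def by blast
  qed
  moreover have "U v = 0"
  proof (rule ccontr)
    assume "U v \<noteq> 0"
    hence "k_reachable E U v 1" unfolding k_reachable_def by (intro exI[of _ U]) simp
    thus False using nU unfolding reachable_def by blast
  qed
  ultimately have z: "dist_add P U v = 0" unfolding dist_add_def by simp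
  obtain Q where Q: "(pebbling_move E)\<^sup>*\<^sup>* (dist_add P U) Q" "1 \<le> Q v"
    using rPU unfolding reachable_def k_reachable_def by blast
  have irr: "\<forall>x. \<not> E x x" using sg unfolding simple_graph_def by blast
  obtain R a where Ra: "(pebbling_move E)\<^sup>*\<^sup>* (dist_add P U) R" "2 \<le> R a" "E a v"
    using last_move[OF Q(1) z Q(2) irr] by blast
  have sgE: "\<forall>x y. E x y \<longrightarrow> x \<in> V \<and> y \<in> V" "\<forall>x y. E x y \<longrightarrow> E y x"
    using sg unfolding simple_graph_def by blast+
  have aV: "a \<in> V" using sgE(1) Ra(3) by blast
  have Eva: "E v a" using sgE(2) Ra(3) by blast
  have k2: "k_reachable E (dist_add P U) a 2" using Ra unfolding k_reachable_def by blast
  have b: "\<forall>y. k_reachable E (dist_add P U) a y \<longrightarrow> y \<le> sum (dist_add P U) V"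
    using kr_bound[OF sg dPU aV] by blast
  have "2 \<le> reach E (dist_add P U) a"
    unfolding reach_def by (rule Greatest_le_nat[of "k_reachable E (dist_add P U) a", OF k2]) (use b in blast)
  moreover have "reachable E (dist_add P U) a" using Ra(1,2) unfolding reachable_def k_reachable_def
    by (intro exI[of _ R]) simp
  ultimately have "exc E (dist_add P U) a \<ge> 1" unfolding exc_def by simp
  moreover have "exc E P a = 0" using exc_zero[OF sg assms(2) aV Ra(3) nP] .
  moreover have "exc E U a = 0" using exc_zero[OF sg dU aV Ra(3) nU] .
  ultimately have "has_cooperation_excess E P U a"
    unfolding has_cooperation_excess_def cooperation_excess_def by simp
  then show "\<exists>w. E v w \<and> has_cooperation_excess E P U w" using Eva by (intro exI[of _ a] conjI)
qed

end
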